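(* Let $r\in\mathbb Z_+$, $\mathfrak B$ a finite-dimensional Banach space, $\mathcal C$ the space of functions $[-r,0]\cap\mathbb Z\to\mathfrak B$ with norm $\|\varphi\|=\sum_{k=0}^r|\varphi(-k)|$, $A:\mathbb Z\to\mathfrak A$ and $f:\mathbb Z\to\mathfrak B$. Let $\psi(t,u,(A,f))$ be a solution of $u(t+1)=A(t)u_t+f(t)$ whose values $\{\psi(t,u,(A,f)):t\in\mathbb Z_+\}$ form a relatively compact set. Then the set $$H^+(u,(A,f)):=\overline{\{(\tilde\psi(\tau,u,(A,f)),(A_\tau,f_\tau)):\ \tau\ge0\}}\subseteq X:=\mathcal C\times H(A,f)$$ is conditionally compact with respect to $(X,h,Y)$, where $Y:=H(A,f)$ and $h:=pr_2:X\to Y$.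
   Context: $\mathfrak A$ is the Banach space of linear operators $\mathcal C\to\mathfrak B$ with operator norm; $C(\mathbb Z,\cdot)$ carries the topology of pointwise (compact-open) convergence. For a function $u$ and integer $t$, $u_t\in\mathcal C$ is $u_t(s)=u(t+s)$, $s\in[-r,0]$. $\psi(t,u,(A,f))$ denotes the solution defined for $t\ge-r$ with $\psi(s)=u(s)$ on $[-r,0]$, and $\tilde\psi(t,u,(A,f))\in\mathcal C$ is $\tilde\psi(t,u,(A,f))(s):=\psi(t+s,u,(A,f))$. $A_\tau(t)=A(t+\tau)$, $f_\tau(t)=f(t+\tau)$, and $H(A,f)$ is the closure of $\{(A_\tau,f_\tau):\tau\in\mathbb Z\}$ in $C(\mathbb Z,\mathfrak A)\times C(\mathbb Z,\mathfrak B)$. A subset $M\subseteq X$ is conditionally compact w.r.t. $(X,h,Y)$ if it is closed and $h^{-1}(Y')\cap M$ is relatively compact for every relatively compact $Y'\subseteq Y$. *)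

theory Defs
  imports "HOL-Analysis.Analysis"
begin

text \<open>Phase space C: functions [-r,0] \<inter> Z \<rightarrow> B, represented as functions int \<Rightarrow> B
  that vanish outside {-r..0}.\<close>
definition Cspace :: "nat \<Rightarrow> (int \<Rightarrow> 'b::euclidean_space) set" where
  "Cspace r = {\<phi>. \<forall>s. s \<notin> {- int r..0} \<longrightarrow> \<phi> s = 0}"

definition Cnorm :: "nat \<Rightarrow> (int \<Rightarrow> 'b::euclidean_space) \<Rightarrow> real" where
  "Cnorm r \<phi> = (\<Sum>k=0..r. norm (\<phi> (- int k)))"

definition Cdist :: "nat \<Rightarrow> (int \<Rightarrow> 'b::euclidean_space) \<Rightarrow> (int \<Rightarrow> 'b) \<Rightarrow> real" where
  "Cdist r \<phi> \<eta> = Cnorm r (\<lambda>s. \<phi> s - \<eta> s)"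

definition Ctop :: "nat \<Rightarrow> (int \<Rightarrow> 'b::euclidean_space) topology" where
  "Ctop r = Metric_space.mtopology (Cspace r) (Cdist r)"

text \<open>The space \<AA> of linear operators C \<rightarrow> B (extensional: zero outside C).\<close>
definition Aspace :: "nat \<Rightarrow> ((int \<Rightarrow> 'b::euclidean_space) \<Rightarrow> 'b) set" where
  "Aspace r = {L. (\<forall>\<phi>\<in>Cspace r. \<forall>\<eta>\<in>Cspace r. L (\<lambda>s. \<phi> s + \<eta> s) = L \<phi> + L \<eta>)
                 \<and> (\<forall>\<phi>\<in>Cspace r. \<forall>c. L (\<lambda>s. c *\<^sub>R \<phi> s) = c *\<^sub>R L \<phi>)
                 \<and> (\<forall>\<phi>. \<phi> \<notin> Cspace r \<longrightarrow> L \<phi> = 0)}"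

definition Adist :: "nat \<Rightarrow> ((int \<Rightarrow> 'b::euclidean_space) \<Rightarrow> 'b) \<Rightarrow> ((int \<Rightarrow> 'b) \<Rightarrow> 'b) \<Rightarrow> real" where
  "Adist r L M = (SUP \<phi>\<in>{\<phi>\<in>Cspace r. Cnorm r \<phi> \<le> 1}. norm (L \<phi> - M \<phi>))"

definition Atop :: "nat \<Rightarrow> ((int \<Rightarrow> 'b::euclidean_space) \<Rightarrow> 'b) topology" where
  "Atop r = Metric_space.mtopology (Aspace r) (Adist r)"

text \<open>Topology of C(Z,\<AA>) \<times> C(Z,B): pointwise convergence.\<close>
definition HullTop :: "nat \<Rightarrow> ((int \<Rightarrow> (int \<Rightarrow> 'b::euclidean_space) \<Rightarrow> 'b) \<times> (int \<Rightarrow> 'b)) topology" where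
  "HullTop r = prod_topology (product_topology (\<lambda>_. Atop r) UNIV) (product_topology (\<lambda>_. euclidean) UNIV)"

definition hull_Af :: "nat \<Rightarrow> (int \<Rightarrow> (int \<Rightarrow> 'b::euclidean_space) \<Rightarrow> 'b) \<Rightarrow> (int \<Rightarrow> 'b)
    \<Rightarrow> ((int \<Rightarrow> (int \<Rightarrow> 'b) \<Rightarrow> 'b) \<times> (int \<Rightarrow> 'b)) set" where
  "hull_Af r A f = (HullTop r) closure_of {((\<lambda>t. A (t + \<tau>)), (\<lambda>t. f (t + \<tau>))) | \<tau>::int. True}"

definition seg :: "nat \<Rightarrow> (int \<Rightarrow> 'b::euclidean_space) \<Rightarrow> int \<Rightarrow> (int \<Rightarrow> 'b)" where
  "seg r u t = (\<lambda>s. if - int r \<le> s \<and> s \<le> 0 then u (t + s) else 0)"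

definition Xtop :: "nat \<Rightarrow> (int \<Rightarrow> (int \<Rightarrow> 'b::euclidean_space) \<Rightarrow> 'b) \<Rightarrow> (int \<Rightarrow> 'b)
    \<Rightarrow> ((int \<Rightarrow> 'b) \<times> ((int \<Rightarrow> (int \<Rightarrow> 'b) \<Rightarrow> 'b) \<times> (int \<Rightarrow> 'b))) topology" where
  "Xtop r A f = prod_topology (Ctop r) (subtopology (HullTop r) (hull_Af r A f))"

definition Ytop :: "nat \<Rightarrow> (int \<Rightarrow> (int \<Rightarrow> 'b::euclidean_space) \<Rightarrow> 'b) \<Rightarrow> (int \<Rightarrow> 'b)
    \<Rightarrow> ((int \<Rightarrow> (int \<Rightarrow> 'b) \<Rightarrow> 'b) \<times> (int \<Rightarrow> 'b)) topology" where
  "Ytop r A f = subtopology (HullTop r) (hull_Af r A f)"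

definition cond_compact :: "'x topology \<Rightarrow> ('x \<Rightarrow> 'y) \<Rightarrow> 'y topology \<Rightarrow> 'x set \<Rightarrow> bool" where
  "cond_compact X h Y M \<longleftrightarrow> closedin X M \<and>
     (\<forall>Y'. Y' \<subseteq> topspace Y \<and> compactin Y (Y closure_of Y') \<longrightarrow>
        compactin X (X closure_of ({x \<in> topspace X. h x \<in> Y'} \<inter> M)))"

definition Hplus :: "nat \<Rightarrow> (int \<Rightarrow> 'b::euclidean_space) \<Rightarrow> (int \<Rightarrow> (int \<Rightarrow> 'b) \<Rightarrow> 'b) \<Rightarrow> (int \<Rightarrow> 'b)
    \<Rightarrow> ((int \<Rightarrow> 'b) \<times> ((int \<Rightarrow> (int \<Rightarrow> 'b) \<Rightarrow> 'b) \<times> (int \<Rightarrow> 'b))) set" where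
  "Hplus r psi A f = (Xtop r A f) closure_of
     {(seg r psi \<tau>, ((\<lambda>t. A (t + \<tau>)), (\<lambda>t. f (t + \<tau>)))) | \<tau>::int. \<tau> \<ge> 0}"

end

theory Submission
  imports Defs
begin

lemma Cspace_outside: "\<phi> \<in> Cspace r \<Longrightarrow> s \<notin> {- int r..0} \<Longrightarrow> \<phi> s = 0"
  by (simp add: Cspace_def)

lemma Cdist_metric: "Metric_space (Cspace r) (Cdist r :: (int \<Rightarrow> 'b::euclidean_space) \<Rightarrow> _)"
proof
  fix x y :: "int \<Rightarrow> 'b"
  show "0 \<le> Cdist r x y" by (simp add: Cdist_def Cnorm_def sum_nonneg)
  show "Cdist r x y = Cdist r y x" by (simp add: Cdist_def Cnorm_def norm_minus_commute)
  assume xy: "x \<in> Cspace r" "y \<in> Cspace r"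
  show "Cdist r x y = 0 \<longleftrightarrow> x = y"
  proof
    assume "Cdist r x y = 0"
    then have h: "\<forall>k\<in>{0..r}. norm (x (- int k) - y (- int k)) = 0"
      by (simp add: Cdist_def Cnorm_def sum_nonneg_eq_0_iff)
    show "x = y"
    proof
      fix s
      show "x s = y s"
      proof (cases "s \<in> {- int r..0}")
        case True
        then have "nat (-s) \<in> {0..r}" "- int (nat (-s)) = s" by auto
        then show ?thesis using h by force
      next
        case False
        then show ?thesis using xy Cspace_outside by metis
      qed
    qed
  qed (simp add: Cdist_def Cnorm_def)
next
  fix x y z :: "int \<Rightarrow> 'b"
  show "Cdist r x z \<le> Cdist r x y + Cdist r y z"
    unfolding Cdist_def Cnorm_def sum.distrib[symmetric]
    by (rule sum_mono, rule norm_diff_triangle_le) auto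
qed

lemma topspace_Ctop: "topspace (Ctop r) = Cspace r"
  unfolding Ctop_def using Metric_space.topspace_mtopology[OF Cdist_metric] by blast

definition gext :: "nat \<Rightarrow> (int \<Rightarrow> 'b::euclidean_space) \<Rightarrow> (int \<Rightarrow> 'b)" where
  "gext r \<phi> = (\<lambda>s. if s \<in> {- int r..0} then \<phi> s else 0)"

lemma gext_Cspace: "gext r \<phi> \<in> Cspace r"
  by (simp add: gext_def Cspace_def)

lemma gext_cont: "continuous_map (product_topology (\<lambda>_. euclidean) {- int r..0}) (Ctop r) (gext r :: (int \<Rightarrow> 'b::euclidean_space) \<Rightarrow> _)"
  unfolding Ctop_def Metric_space.continuous_map_to_metric[OF Cdist_metric]
proof (intro ballI allI impI)
  fix x :: "int \<Rightarrow> 'b" and \<epsilon> :: real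
  assume x: "x \<in> topspace (product_topology (\<lambda>_. euclidean) {- int r..0})" and e: "\<epsilon> > 0"
  define \<delta> where "\<delta> = \<epsilon> / (real r + 1)"
  have d: "\<delta> > 0" using e by (simp add: \<delta>_def)
  define U where "U = (\<Inter>k\<in>{- int r..0}. {y \<in> topspace (product_topology (\<lambda>_. euclidean) {- int r..0}). y k \<in> ball (x k) \<delta>})"
  have "openin (product_topology (\<lambda>_. euclidean) {- int r..0}) U"
    unfolding U_def
    apply (rule openin_INT2)
      apply simp
     apply (simp add: atLeastAtMost_iff)
    apply (rule openin_continuous_map_preimage)
     apply (erule continuous_map_product_projection)
    apply simp
    done
  moreover have "x \<in> U" using x d by (auto simp: U_def)
  moreover have "\<forall>y\<in>U. gext r y \<in> Metric_space.mball (Cspace r) (Cdist r) (gext r x) \<epsilon>"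
  proof
    fix y assume y: "y \<in> U"
    have "Cdist r (gext r x) (gext r y) = (\<Sum>k=0..r. norm (x (- int k) - y (- int k)))"
      by (simp add: Cdist_def Cnorm_def gext_def)
    also have "\<dots> < (\<Sum>k=0..r. \<delta>)"
    proof (rule sum_strict_mono)
      fix k assume "k \<in> {0..r}"
      then have "- int k \<in> {- int r..0}" by auto
      then show "norm (x (- int k) - y (- int k)) < \<delta>"
        using y by (auto simp: U_def dist_norm)
    qed auto
    also have "\<dots> = \<epsilon>" by (simp add: \<delta>_def field_simps)
    finally show "gext r y \<in> Metric_space.mball (Cspace r) (Cdist r) (gext r x) \<epsilon>"
      by (simp add: Metric_space.in_mball[OF Cdist_metric] gext_Cspace)
  qed
  ultimately show "\<exists>U. openin (product_topology (\<lambda>_. euclidean) {- int r..0}) U \<and> x \<in> U \<and>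
      (\<forall>y\<in>U. gext r y \<in> Metric_space.mball (Cspace r) (Cdist r) (gext r x) \<epsilon>)" by blast
qed

lemma K_compact:
  assumes "compact (Q :: 'b::euclidean_space set)"
  shows "compactin (Ctop r) (gext r ` PiE {- int r..0} (\<lambda>_. Q))"
  by (rule image_compactin[OF _ gext_cont]) (simp add: compactin_PiE assms)

lemma K_closed:
  assumes "compact (Q :: 'b::euclidean_space set)"
  shows "closedin (Ctop r) (gext r ` PiE {- int r..0} (\<lambda>_. Q))"
  by (rule compactin_imp_closedin[OF _ K_compact[OF assms]])
     (simp add: Ctop_def Metric_space.Hausdorff_space_mtopology[OF Cdist_metric])

lemma Xtop_eq: "Xtop r A f = prod_topology (Ctop r) (Ytop r A f)"
  by (simp add: Xtop_def Ytop_def)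

theorem lemmal04p3:
  fixes r :: nat
    and A :: "int \<Rightarrow> (int \<Rightarrow> 'b::euclidean_space) \<Rightarrow> 'b"
    and f :: "int \<Rightarrow> 'b"
    and u :: "int \<Rightarrow> 'b"
    and psi :: "int \<Rightarrow> 'b"
  assumes A_op: "\<And>t. A t \<in> Aspace r"
    and u_C: "u \<in> Cspace r"
    and init: "\<And>s. - int r \<le> s \<Longrightarrow> s \<le> 0 \<Longrightarrow> psi s = u s"
    and sol: "\<And>t. t \<ge> 0 \<Longrightarrow> psi (t + 1) = A t (seg r psi t) + f t"
    and relcomp: "compact (closure {psi t | t. t \<ge> 0})"
  shows "cond_compact (Xtop r A f) snd (Ytop r A f) (Hplus r psi A f)"
proof -
  define Q where "Q = closure {psi t | t. t \<ge> 0} \<union> psi ` {- int r..0}"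
  have cQ: "compact Q" unfolding Q_def
    by (rule compact_Un[OF relcomp finite_imp_compact]) simp
  define K where "K = gext r ` PiE {- int r..0} (\<lambda>_. Q)"
  have Kc: "compactin (Ctop r) K" and Kcl: "closedin (Ctop r) K"
    using K_compact[OF cQ] K_closed[OF cQ] by (simp_all add: K_def)
  have KC: "K \<subseteq> Cspace r" using compactin_subset_topspace[OF Kc] unfolding topspace_Ctop .
  have segK: "seg r psi \<tau> \<in> K" if "\<tau> \<ge> 0" for \<tau>
  proof -
    have "seg r psi \<tau> = gext r (restrict (\<lambda>s. psi (\<tau> + s)) {- int r..0})"
      unfolding seg_def gext_def restrict_def by (rule ext) (simp add: atLeastAtMost_iff)
    moreover have "restrict (\<lambda>s. psi (\<tau> + s)) {- int r..0} \<in> PiE {- int r..0} (\<lambda>_. Q)"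
    proof (rule restrict_PiE_iff[THEN iffD2], intro ballI)
      fix s assume s: "s \<in> {- int r..0}"
      show "psi (\<tau> + s) \<in> Q"
      proof (cases "\<tau> + s \<ge> 0")
        case True
        then have "psi (\<tau> + s) \<in> {psi t | t. t \<ge> 0}" by blast
        then show ?thesis unfolding Q_def by (intro UnI1 closure_subset[THEN subsetD])
      next
        case False
        then have "\<tau> + s \<in> {- int r..0}" using s that by auto
        then show ?thesis unfolding Q_def by (intro UnI2 imageI)
      qed
    qed
    ultimately show ?thesis unfolding K_def by (simp add: image_eqI)
  qed
  let ?X = "Xtop r A f" and ?Y = "Ytop r A f"
  let ?T = "{(seg r psi \<tau>, ((\<lambda>t. A (t + \<tau>)), (\<lambda>t. f (t + \<tau>)))) | \<tau>::int. \<tau> \<ge> 0}"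
  have topX: "topspace ?X = Cspace r \<times> topspace ?Y"
    by (simp add: Xtop_eq topspace_Ctop)
  have "?X closure_of ?T \<subseteq> ?X closure_of (K \<times> UNIV)"
    by (rule closure_of_mono) (auto intro: segK)
  also have "\<dots> = ?X closure_of (K \<times> topspace ?Y)"
  proof -
    have "topspace ?X \<inter> (K \<times> UNIV) = K \<times> topspace ?Y" using topX KC by auto
    then show ?thesis using closure_of_restrict[of ?X "K \<times> UNIV"] by simp
  qed
  also have "\<dots> = K \<times> topspace ?Y"
    by (rule closure_of_closedin) (simp add: Xtop_eq closedin_prod_Times_iff Kcl)
  finally have MK: "Hplus r psi A f \<subseteq> K \<times> topspace ?Y" by (simp add: Hplus_def)
  show ?thesis
    unfolding cond_compact_def
  proof (intro conjI allI impI)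
    show "closedin ?X (Hplus r psi A f)" by (simp add: Hplus_def)
    fix Y' assume Y': "Y' \<subseteq> topspace ?Y \<and> compactin ?Y (?Y closure_of Y')"
    let ?Z = "?Y closure_of Y'"
    have "{x \<in> topspace ?X. snd x \<in> Y'} \<inter> Hplus r psi A f \<subseteq> K \<times> ?Z"
    proof
      fix x assume x: "x \<in> {x \<in> topspace ?X. snd x \<in> Y'} \<inter> Hplus r psi A f"
      then have "fst x \<in> K" using MK by (auto simp: mem_Times_iff)
      moreover have "snd x \<in> ?Z" using x Y' closure_of_subset[of Y' ?Y] by blast
      ultimately show "x \<in> K \<times> ?Z" by (simp add: mem_Times_iff)
    qed
    moreover have "closedin ?X (K \<times> ?Z)"
      by (simp add: Xtop_eq closedin_prod_Times_iff Kcl)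
    ultimately have sub: "?X closure_of ({x \<in> topspace ?X. snd x \<in> Y'} \<inter> Hplus r psi A f) \<subseteq> K \<times> ?Z"
      by (rule closure_of_minimal)
    have "compactin ?X (K \<times> ?Z)"
      using Y' Kc by (simp add: Xtop_eq compactin_Times)
    then show "compactin ?X (?X closure_of ({x \<in> topspace ?X. snd x \<in> Y'} \<inter> Hplus r psi A f))"
      by (rule closed_compactin[OF _ sub closedin_closure_of])
  qed
qed

end
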